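(* There are no binary self-orthogonal $[125,7,62]$ codes and no binary self-orthogonal $[62,7,30]$ codes.
   Context: A binary linear code $C$ is self-orthogonal if $C\subseteq C^\perp$. *)

theory Defs
  imports "HOL-Analysis.Analysis" "HOL-Library.Z2"
begin

text \<open>Binary words of length n are vectors in bit^'n, where the finite index type 'n
  has CARD('n) = n (e.g. the numeral type 125).\<close>

definition hamming_dist :: "bit^'n \<Rightarrow> bit^'n \<Rightarrow> nat" where
  "hamming_dist x y = card {i. x $ i \<noteq> y $ i}"

definition min_distance :: "(bit^'n) set \<Rightarrow> nat" where
  "min_distance C = Min {hamming_dist x y | x y. x \<in> C \<and> y \<in> C \<and> x \<noteq> y}"

definition binary_linear_code :: "nat \<Rightarrow> nat \<Rightarrow> (bit^'n) set \<Rightarrow> bool" where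
  "binary_linear_code k d C \<longleftrightarrow> vec.subspace C \<and> vec.dim C = k \<and> min_distance C = d"

definition dot2 :: "bit^'n \<Rightarrow> bit^'n \<Rightarrow> bit" where
  "dot2 x y = (\<Sum>i\<in>UNIV. x $ i * y $ i)"

definition dual_code :: "(bit^'n) set \<Rightarrow> (bit^'n) set" where
  "dual_code C = {y. \<forall>x\<in>C. dot2 x y = 0}"

definition self_orthogonal :: "(bit^'n) set \<Rightarrow> bool" where
  "self_orthogonal C \<longleftrightarrow> C \<subseteq> dual_code C"

end

theory Submission
  imports Defs
begin
instance bit :: finite
proof
  have "(UNIV::bit set) = {0,1}" by (auto intro: bit.exhaust)
  then show "finite (UNIV::bit set)" by (metis finite.emptyI finite.insertI)
qed

lemma card_span_ge:
  fixes B :: "(bit^'n) set"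
  assumes "vec.independent B"
  shows "2 ^ card B \<le> card (vec.span B)"
proof -
  have fB: "finite B" using assms vec.independent_bound_general by blast
  have inj: "inj_on (sum (\<lambda>x. x)) (Pow B)"
  proof (rule inj_onI)
    fix S T assume S: "S \<in> Pow B" and T: "T \<in> Pow B" and e: "sum (\<lambda>x. x) S = sum (\<lambda>x. x) T"
    have fS: "finite S" "finite T" using S T fB finite_subset by auto
    have r: "\<And>U. U \<subseteq> B \<Longrightarrow> (\<Sum>v\<in>B. of_bool (v\<in>U) *s v) = sum (\<lambda>x. x) U"
    proof -
      fix U assume U: "U \<subseteq> B"
      have "(\<Sum>v\<in>B. of_bool (v\<in>U) *s v) = (\<Sum>v\<in>B. if v \<in> U then v else 0)"
        by (rule sum.cong) auto
      also have "\<dots> = sum (\<lambda>x. x) (B \<inter> U)" using fB by (simp add: sum.inter_restrict)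
      also have "B \<inter> U = U" using U by auto
      finally show "(\<Sum>v\<in>B. of_bool (v\<in>U) *s v) = sum (\<lambda>x. x) U" .
    qed
    have z: "(\<Sum>v\<in>B. (of_bool (v\<in>S) - of_bool (v\<in>T)) *s v) = 0"
    proof -
      have "(\<Sum>v\<in>B. (of_bool (v\<in>S) - of_bool (v\<in>T)) *s v)
          = (\<Sum>v\<in>B. of_bool (v\<in>S) *s v) - (\<Sum>v\<in>B. (of_bool (v\<in>T)::bit) *s v)"
        by (simp only: vec.scale_left_diff_distrib sum_subtractf)
      also have "\<dots> = 0" using r[of S] r[of T] S T e by simp
      finally show ?thesis .
    qed
    have "\<forall>v\<in>B. (of_bool (v\<in>S) - of_bool (v\<in>T) :: bit) = 0"
      using vec.independentD[OF assms fB subset_refl z] by blast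
    then show "S = T" using S T by (auto split: if_splits)
  qed
  have "sum (\<lambda>x. x) ` Pow B \<subseteq> vec.span B"
    by (auto intro!: vec.span_sum intro: vec.span_base)
  moreover have "finite (vec.span B)" by simp
  ultimately have "card (sum (\<lambda>x. x) ` Pow B) \<le> card (vec.span B)" by (rule card_mono[rotated])
  then show ?thesis using card_image[OF inj] fB by (simp add: card_Pow)
qed

definition wt :: "bit^'n \<Rightarrow> nat" where "wt x = card {i. x $ i \<noteq> 0}"

lemma card_sum_if: "card {i::'n::finite. P i} = (\<Sum>i\<in>UNIV. if P i then 1 else 0)"
  by (simp add: sum.If_cases)

lemma wt_add: "wt (x + y) + 2 * card {i. x$i = 1 \<and> y$i = 1} = wt x + wt y"
proof -
  have "wt (x + y) + 2 * card {i. x$i = 1 \<and> y$i = 1}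
     = (\<Sum>i\<in>UNIV. (if (x+y)$i \<noteq> 0 then 1 else 0) + 2 * (if x$i = 1 \<and> y$i = 1 then 1 else 0))"
    unfolding wt_def card_sum_if[of "\<lambda>i. (x+y)$i \<noteq> 0"] card_sum_if[of "\<lambda>i. x$i = 1 \<and> y$i = 1"]
    by (simp add: sum.distrib sum_distrib_left)
  also have "\<dots> = (\<Sum>i\<in>UNIV. (if x$i \<noteq> 0 then 1 else 0) + (if y$i \<noteq> 0 then 1 else 0))"
    by (rule sum.cong) (auto elim!: bit.exhaust[of "x$_"] bit.exhaust[of "y$_"])
  also have "\<dots> = wt x + wt y"
    unfolding wt_def card_sum_if[of "\<lambda>i. x$i \<noteq> 0"] card_sum_if[of "\<lambda>i. y$i \<noteq> 0"]
    by (simp add: sum.distrib)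
  finally show ?thesis .
qed

lemma of_nat_bit: "(of_nat k :: bit) = (if even k then 0 else 1)"
  by (induction k) auto

lemma dot2_card: "dot2 x y = of_nat (card {i. x$i = 1 \<and> y$i = 1})"
proof -
  have "dot2 x y = (\<Sum>i\<in>UNIV. of_nat (if x$i = 1 \<and> y$i = 1 then 1 else 0))"
    unfolding dot2_def
    by (rule sum.cong) (auto elim!: bit.exhaust[of "x$_"] bit.exhaust[of "y$_"])
  also have "\<dots> = of_nat (card {i. x$i = 1 \<and> y$i = 1})"
    unfolding card_sum_if[of "\<lambda>i. x$i = 1 \<and> y$i = 1"] of_nat_sum by simp
  finally show ?thesis .
qed

lemma so_even: "self_orthogonal C \<Longrightarrow> x \<in> C \<Longrightarrow> y \<in> C \<Longrightarrow> even (card {i. x$i = 1 \<and> y$i = 1})"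
  unfolding self_orthogonal_def dual_code_def
  using dot2_card[of x y] of_nat_bit by (auto split: if_splits)

lemma wt_zero: "wt (0::bit^'n) = 0" by (simp add: wt_def)

lemma hd0: "hamming_dist x 0 = wt x" by (simp add: hamming_dist_def wt_def)

lemma h1: "(a::nat) mod 4 = (b + c) mod 4 \<Longrightarrow> 4 dvd b \<Longrightarrow> 4 dvd c \<Longrightarrow> 4 dvd a"
proof -
  assume a: "(a::nat) mod 4 = (b + c) mod 4" and "4 dvd b" "4 dvd c"
  have "4 dvd (b + c)" using \<open>4 dvd b\<close> \<open>4 dvd c\<close> by (rule dvd_add)
  then have "(b + c) mod 4 = 0" by (rule dvd_imp_mod_0)
  then show ?thesis using a by (simp add: dvd_eq_mod_eq_0)
qed
lemma m2: "even (b::nat) \<Longrightarrow> \<not> 4 dvd b \<Longrightarrow> b mod 4 = 2"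
proof -
  assume e: "even b" and n: "\<not> 4 dvd b"
  obtain p where p: "b = 2 * p" using e by blast
  have "odd p" using n p by auto
  then obtain q where "p = 2 * q + 1" using oddE by blast
  then have b: "b = 2 + q * 4" using p by simp
  have "(2 + q * 4) mod (4::nat) = 2 mod 4" by (rule mod_mult_self1)
  then show ?thesis using b by simp
qed
lemma h2: "(a::nat) mod 4 = (b + c) mod 4 \<Longrightarrow> \<not> 4 dvd b \<Longrightarrow> \<not> 4 dvd c \<Longrightarrow> even b \<Longrightarrow> even c \<Longrightarrow> 4 dvd a"
proof -
  assume a: "(a::nat) mod 4 = (b + c) mod 4" and "\<not> 4 dvd b" "\<not> 4 dvd c" "even b" "even c"
  then have "b mod 4 = 2" "c mod 4 = 2" using m2 by auto
  moreover have "(b + c) mod 4 = (b mod 4 + c mod 4) mod 4" by (rule mod_add_eq[symmetric])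
  ultimately have "a mod 4 = 0" using a by simp
  then show ?thesis by (simp add: dvd_eq_mod_eq_0)
qed
lemma h3: "(a::nat) + 2 * m = b + c \<Longrightarrow> m = 2 * k \<Longrightarrow> a mod 4 = (b + c) mod 4"
proof -
  assume "a + 2 * m = b + c" "m = 2 * k"
  then have e: "b + c = a + k * 4" by simp
  have "(a + k * 4) mod 4 = a mod (4::nat)" by (rule mod_mult_self1)
  then show ?thesis using e by simp
qed

lemma ar: "2 * b \<le> a + 2 * w \<Longrightarrow> 64 * a + 2 * b < 128 * b \<Longrightarrow> 64 * w \<le> b \<Longrightarrow> False" for a b w :: nat
  by linarith

lemma key:
  fixes C :: "(bit^'n) set"
  assumes sub: "vec.subspace C" and cC: "128 \<le> card C" and so: "self_orthogonal C"
    and wb: "\<And>c. c \<in> C \<Longrightarrow> c \<noteq> 0 \<Longrightarrow> 4 dvd wt c \<Longrightarrow> w \<le> wt c"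
    and ineq: "64 * CARD('n) + 2 * w < 128 * w"
  shows False
proof -
  have add: "x + y \<in> C" if "x \<in> C" "y \<in> C" for x y using sub that by (rule vec.subspace_add)
  have z: "0 \<in> C" using sub by (rule vec.subspace_0)
  have ev: "even (wt x)" if "x \<in> C" for x
  proof -
    have "{i. x$i = 1 \<and> x$i = 1} = {i. x$i \<noteq> 0}" by auto
    then show ?thesis using so_even[OF so that that] by (simp add: wt_def)
  qed
  have m4: "wt (x + y) mod 4 = (wt x + wt y) mod 4" if xy: "x \<in> C" "y \<in> C" for x y
  proof -
    obtain k where "card {i. x$i = 1 \<and> y$i = 1} = 2 * k" using so_even[OF so xy] by blast
    then show ?thesis using wt_add[of x y] by (rule h3[rotated])
  qed
  define D where "D = {c \<in> C. 4 dvd wt c}"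
  have DC: "D \<subseteq> C" by (auto simp: D_def)
  have Dadd: "x + y \<in> D" if "x \<in> D" "y \<in> D" for x y
  proof -
    have xy: "x \<in> C" "y \<in> C" "4 dvd wt x" "4 dvd wt y" using that by (auto simp: D_def)
    have "wt (x + y) mod 4 = (wt x + wt y) mod 4" using m4 xy by blast
    then have "4 dvd wt (x + y)" using xy(3,4) by (rule h1)
    then show ?thesis using add xy by (simp add: D_def)
  qed
  have z: "0 \<in> D" using z by (simp add: D_def wt_zero)
  have fC: "finite C" by simp
  have fD: "finite D" by simp
  have cardD: "card C \<le> 2 * card D"
  proof (cases "C - D = {}")
    case True then have "C = D" using DC by auto
    then show ?thesis by simp
  next
    case False
    then obtain c1 where c1: "c1 \<in> C" "c1 \<notin> D" by blast
    have "(\<lambda>c. c + c1) ` (C - D) \<subseteq> D"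
    proof
      fix x assume "x \<in> (\<lambda>c. c + c1) ` (C - D)"
      then obtain c where c: "c \<in> C" "c \<notin> D" "x = c + c1" by blast
      have n4: "\<not> 4 dvd wt c" "\<not> 4 dvd wt c1" using c c1 by (auto simp: D_def)
      have e2: "even (wt c)" "even (wt c1)" using ev c(1) c1(1) by auto
      have "4 dvd wt (c + c1)" using h2[OF m4[OF c(1) c1(1)] n4 e2] .
      then show "x \<in> D" using add[OF c(1) c1(1)] c by (simp add: D_def)
    qed
    then have "card ((\<lambda>c. c + c1) ` (C - D)) \<le> card D" using fD by (intro card_mono)
    moreover have "inj_on (\<lambda>c. c + c1) (C - D)" by (rule inj_onI) simp
    ultimately have "card (C - D) \<le> card D" by (simp add: card_image)
    moreover have "card C = card D + card (C - D)" using DC fC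
      by (simp add: card_Diff_subset card_mono)
    ultimately show ?thesis by simp
  qed
  have coord: "2 * card {c \<in> D. c$i = 1} \<le> card D" for i
  proof (cases "{c \<in> D. c$i = 1} = {}")
    case True then show ?thesis by (metis card.empty mult_0_right zero_le)
  next
    case False
    then obtain c0 where c0: "c0 \<in> D" "c0$i = 1" by blast
    have "(\<lambda>c. c + c0) ` {c \<in> D. c$i = 1} \<subseteq> {c \<in> D. c$i = 0}"
      using Dadd c0 by auto
    then have "card ((\<lambda>c. c + c0) ` {c \<in> D. c$i = 1}) \<le> card {c \<in> D. c$i = 0}"
      using fD by (intro card_mono) auto
    moreover have "inj_on (\<lambda>c. c + c0) {c \<in> D. c$i = 1}" by (rule inj_onI) simp
    ultimately have "card {c \<in> D. c$i = 1} \<le> card {c \<in> D. c$i = 0}"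
      by (simp add: card_image)
    moreover have "card D = card {c \<in> D. c$i = 1} + card {c \<in> D. c$i = 0}"
    proof -
      have "D = {c \<in> D. c$i = 1} \<union> {c \<in> D. c$i = 0}" by (auto elim: bit.exhaust[of "_$i"])
      moreover have "{c \<in> D. c$i = 1} \<inter> {c \<in> D. c$i = 0} = {}" by auto
      moreover have "card ({c \<in> D. c$i = 1} \<union> {c \<in> D. c$i = 0}) = card {c \<in> D. c$i = 1} + card {c \<in> D. c$i = 0}"
        by (rule card_Un_disjoint) (use fD in auto)
      ultimately show ?thesis by simp
    qed
    ultimately show ?thesis by simp
  qed
  have dc: "(\<Sum>c\<in>D. wt c) = (\<Sum>i\<in>UNIV. card {c \<in> D. c$i = 1})"
  proof -
    have "(\<Sum>c\<in>D. wt c) = (\<Sum>c\<in>D. \<Sum>i\<in>UNIV. if c$i = 1 then 1 else 0)"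
      unfolding wt_def by (rule sum.cong) (auto simp: card_sum_if)
    also have "\<dots> = (\<Sum>i\<in>UNIV. \<Sum>c\<in>D. if c$i = 1 then 1 else 0)" by (rule sum.swap)
    also have "\<dots> = (\<Sum>i\<in>UNIV. card {c \<in> D. c$i = 1})"
      using fD by (simp add: sum.If_cases Int_def)
    finally show ?thesis .
  qed
  have up: "2 * (\<Sum>c\<in>D. wt c) \<le> CARD('n) * card D"
  proof -
    have "2 * (\<Sum>c\<in>D. wt c) = (\<Sum>i\<in>UNIV. 2 * card {c \<in> D. c$i = 1})"
      by (simp add: dc sum_distrib_left)
    also have "\<dots> \<le> (\<Sum>i\<in>(UNIV::'n set). card D)" by (rule sum_mono) (rule coord)
    finally show ?thesis by simp
  qed
  have low: "(card D - 1) * w \<le> (\<Sum>c\<in>D. wt c)"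
  proof -
    have "(card D - 1) * w = (\<Sum>c\<in>D - {0}. w)" using fD z by simp
    also have "\<dots> \<le> (\<Sum>c\<in>D - {0}. wt c)" using wb DC by (intro sum_mono) (auto simp: D_def)
    also have "\<dots> \<le> (\<Sum>c\<in>D. wt c)" using fD by (intro sum_mono2) auto
    finally show ?thesis .
  qed
  have M: "64 \<le> card D" using cC cardD by simp
  obtain k where k: "card D = Suc k" using M by (cases "card D") auto
  have "2 * (k * w) \<le> CARD('n) * card D" using up low k by simp
  then have A: "2 * (card D * w) \<le> CARD('n) * card D + 2 * w" using k by simp
  have B: "card D * (64 * CARD('n) + 2 * w) < card D * (128 * w)" using ineq M by simp
  then have B': "64 * (CARD('n) * card D) + 2 * (card D * w) < 128 * (card D * w)"
    by (simp only: distrib_left mult.assoc mult.left_commute mult.commute)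
  have Cw: "64 * w \<le> card D * w" using M by simp
  show False using ar[OF A B' Cw] .
qed

lemma md_le:
  fixes C :: "(bit^'n) set"
  assumes "c \<in> C" "c \<noteq> 0" "0 \<in> C"
  shows "min_distance C \<le> wt c"
proof -
  let ?S = "{hamming_dist x y | x y. x \<in> C \<and> y \<in> C \<and> x \<noteq> y}"
  have "?S \<subseteq> (\<lambda>p::(bit^'n) \<times> (bit^'n). hamming_dist (fst p) (snd p)) ` UNIV"
  proof
    fix z assume "z \<in> ?S"
    then obtain x y :: "bit^'n" where "z = hamming_dist x y" by blast
    then show "z \<in> (\<lambda>p::(bit^'n) \<times> (bit^'n). hamming_dist (fst p) (snd p)) ` UNIV"
      by (intro image_eqI[where x = "(x,y)"]) auto
  qed
  then have "finite ?S" by (rule finite_subset) simp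
  moreover have "hamming_dist c 0 \<in> ?S" using assms by blast
  ultimately have "Min ?S \<le> hamming_dist c 0" by (rule Min_le)
  then show ?thesis by (simp add: min_distance_def hd0)
qed

lemma card_code:
  fixes C :: "(bit^'n) set"
  assumes "vec.subspace C" "vec.dim C = 7"
  shows "128 \<le> card C"
proof -
  obtain B where B: "B \<subseteq> C" "vec.independent B" "C \<subseteq> vec.span B" "card B = vec.dim C"
    by (rule vec.basis_exists)
  have "vec.span B \<subseteq> C" using B(1) assms(1) by (rule vec.span_minimal)
  then have "card (vec.span B) \<le> card C" by (intro card_mono) simp_all
  moreover have "2 ^ card B \<le> card (vec.span B)" using B(2) by (rule card_span_ge)
  ultimately show ?thesis using B(4) assms(2) by simp
qed

lemma dv4: "4 dvd (x::nat) \<Longrightarrow> m \<le> x \<Longrightarrow> 4 * q \<ge> m \<Longrightarrow> 4 * q < m + 4 \<Longrightarrow> 4 * q \<le> x"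
proof -
  assume "4 dvd x" "m \<le> x" "4 * q \<ge> m" "4 * q < m + 4"
  then obtain r where r: "x = 4 * r" by blast
  then have "q \<le> r" using \<open>m \<le> x\<close> \<open>4 * q < m + 4\<close> by linarith
  then show ?thesis using r by simp
qed

lemma nonex:
  fixes C :: "(bit^'n) set"
  assumes "binary_linear_code 7 d C" "self_orthogonal C"
    and "4 * q \<ge> d" "4 * q < d + 4" and "64 * CARD('n) + 2 * (4 * q) < 128 * (4 * q)"
  shows False
proof -
  have sub: "vec.subspace C" and dm: "vec.dim C = 7" and md: "min_distance C = d"
    using assms(1) by (auto simp: binary_linear_code_def)
  have z: "0 \<in> C" using sub by (rule vec.subspace_0)
  show False
  proof (rule key[OF sub card_code[OF sub dm] assms(2)])
    fix c assume c: "c \<in> C" "c \<noteq> 0" "4 dvd wt c"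
    have "d \<le> wt c" using md_le[OF c(1,2) z] md by simp
    then show "4 * q \<le> wt c" using dv4 c(3) assms(3,4) by blast
  next
    show "64 * CARD('n) + 2 * (4 * q) < 128 * (4 * q)" by (rule assms(5))
  qed
qed

theorem proposition6p2:
  shows "\<not> (\<exists>C :: (bit^125) set. binary_linear_code 7 62 C \<and> self_orthogonal C)
       \<and> \<not> (\<exists>C :: (bit^62) set. binary_linear_code 7 30 C \<and> self_orthogonal C)"
proof (intro conjI notI)
  assume "\<exists>C :: (bit^125) set. binary_linear_code 7 62 C \<and> self_orthogonal C"
  then obtain C :: "(bit^125) set" where "binary_linear_code 7 62 C" "self_orthogonal C" by blast
  then show False by (rule nonex[where q = 16]) simp_all
next
  assume "\<exists>C :: (bit^62) set. binary_linear_code 7 30 C \<and> self_orthogonal C"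
  then obtain C :: "(bit^62) set" where "binary_linear_code 7 30 C" "self_orthogonal C" by blast
  then show False by (rule nonex[where q = 8]) simp_all
qed
end
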